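(* Assume $a^2\rho(\mathbf P_1\mathbf E)<1$. Then for every timestep $k$ and every $D\in\mathbb N$ the look-ahead function $\mathcal G_k^D$ is finite and equals \begin{align*} \mathcal G_k^D =\;& g_D(\bar a^2,\mathbf p_k)\,x_k^2 + 2\big(g_D(a\bar a,\mathbf p_k)-g_D(\bar a^2,\mathbf p_k)\big)x_kz_k\\ &+\big(g_D(a^2,\mathbf p_k)+g_D(\bar a^2,\mathbf p_k)-2g_D(a\bar a,\mathbf p_k)\big)z_k^2 + \bar M\big(g_D(a^2,\mathbf p_k)-g_D(1,\mathbf p_k)\big)\\ &-\Big(B\,f_D(1,\mathbf p_k)+N_k\big[g_D(c^2,\mathbf p_k)-f_D(c^2,\mathbf p_k)\big]\Big), \end{align*} where $N_k:=c^{2(k-R_k)}x_{R_k}^2$, $$g_D(b,\mathbf p):=b^D\,\mathbf d^T(\mathbf I-b\mathbf P_1\mathbf E)^{-1}\mathbf P_0^{D}\mathbf p,\qquad f_D(b,\mathbf p):=b^{\mu}\,\mathbf d^T(\mathbf P_1\mathbf E)^{\mu-D}(\mathbf I-b\mathbf P_1\mathbf E)^{-1}\mathbf P_0^{D}\mathbf p,$$ and $$\mu:=\max\Big\{D,\ \Big\lceil \tfrac{\log(x_{R_k}^2/B)}{\log(1/c^2)}\Big\rceil-(k-R_k)\Big\}$$ (with $\mu:=D$ if $x_{R_k}=0$).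
   Context: Setup. Fix reals $a,L$ with $|a|>1$ and $\bar a:=a+L$ satisfying $0<\bar a^2<1$; fix $c$ with $\bar a^2<c^2<1$, $M>0$, $B>0$, and put $\bar M:=M/(a^2-1)$. Plant: $x_{k+1}=ax_k+u_k+v_k$, $k\in\mathbb N_0$, where $v_k$ are i.i.d. real random variables with mean $0$ and variance $M$, independent of everything else. At each time the sensor chooses $t_k\in\{0,1\}$ (transmit or not); $r_k\in\{0,1\}$ is the reception indicator ($r_k=0$ whenever $t_k=0$). Controller: $u_k=L\hat x_k^+$, with $\hat x_k:=\bar a\hat x_{k-1}^+$, $\hat x_k^+:=x_k$ if $r_k=1$ and $\hat x_k^+:=\hat x_k$ if $r_k=0$; errors $z_k:=x_k-\hat x_k$, $z_k^+:=x_k-\hat x_k^+$. Channel: state $\gamma_k\in\{1,\dots,n\}$; given $\gamma_k=j$ and $t_k=\ell\in\{0,1\}$, $\gamma_{k+1}=i$ with probability $(\mathbf P_\ell)_{ij}$, where $\mathbf P_0,\mathbf P_1$ are $n\times n$ column-stochastic matrices. Drop probabilities $\mathbf e=(e_1,\dots,e_n)^T\in[0,1]^n$: if $t_k=1$ then $r_k=1$ with probability $1-e_{\gamma_k}$, else $r_k=0$. $\mathbf E:=\mathrm{diag}(\mathbf e)$, $\mathbf d:=\mathbf 1-\mathbf e$; $\rho(\cdot)$ is spectral radius, $\boldsymbol\delta_i$ the $i$-th standard basis vector. Convention $r_0=1$; $R_k:=\max\{i<k:r_i=1\}$, $R_k^+:=\max\{i\le k:r_i=1\}$; $S_0:=0$,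 $S_{j+1}:=\min\{k>S_j:r_k=1\}$ (the $j$-th reception time). After a reception at time $k$ the sensor learns $\gamma_k$. $\mathbf p_k$ is the conditional distribution of $\gamma_k$ given $R_k,\gamma_{R_k}$ and $t_{R_k},\dots,t_{k-1}$. Information sets: $I_k:=\{k,x_k,z_k,R_k,x_{R_k},\mathbf p_k,t_{k-1},r_{k-1}\gamma_{k-1}\}$. Performance function: $h_k:=x_k^2-\max\{c^{2(k-R_k)}x_{R_k}^2,B\}$. Nominal policy $\mathcal T_k^D$ ($D\in\mathbb N_0$): $t_i=0$ for $i\in\{k,\dots,k+D-1\}$ and $t_i=1$ for all $i\ge k+D$. Look-ahead function: $\mathcal G_k^D:=\mathbb E_{\mathcal T_k^D}[h_{S_{j+1}}\mid I_k,\,S_j=R_k]$, i.e. the expected value of $h$ at the first reception time after $R_k$ when no reception occurs in $(R_k,k)$ and the nominal policy $\mathcal T_k^D$ is used from time $k$ on. Under this policy, the probability that this first reception happens at time $k+w$ ($w\ge D$), given channel distribution $\mathbf p$ at time $k$, is $\Omega_D(w,\mathbf p)=\mathbf d^T(\mathbf P_1\mathbf E)^{w-D}\mathbf P_0^{D}\mathbf p$. *)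

theory Defs
  imports "HOL-Probability.Probability"
begin

fun mpow :: "real^'n^'n \<Rightarrow> nat \<Rightarrow> real^'n^'n" where
  "mpow A 0 = mat 1"
| "mpow A (Suc m) = A ** mpow A m"

definition cmat :: "real^'n^'m \<Rightarrow> complex^'n^'m" where
  "cmat A = (\<chi> i j. complex_of_real (A $ i $ j))"

definition spectral_radius :: "real^'n^'n \<Rightarrow> real" where
  "spectral_radius A =
     Sup {cmod l | l. \<exists>v::complex^'n. v \<noteq> 0 \<and> cmat A *v v = l *s v}"

definition diag_mat :: "real^'n \<Rightarrow> real^'n^'n" where
  "diag_mat e = (\<chi> i j. if i = j then e $ i else 0)"

text \<open>Column-stochastic: (P)_{ij} = probability of moving to i from j.\<close>
definition column_stochastic :: "real^'n^'n \<Rightarrow> bool" where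
  "column_stochastic P \<longleftrightarrow> (\<forall>i j. 0 \<le> P $ i $ j) \<and> (\<forall>j. (\<Sum>i\<in>UNIV. P $ i $ j) = 1)"

definition prob_vector :: "real^'n \<Rightarrow> bool" where
  "prob_vector p \<longleftrightarrow> (\<forall>i. 0 \<le> p $ i) \<and> (\<Sum>i\<in>UNIV. p $ i) = 1"

definition Omega :: "real^'n^'n \<Rightarrow> real^'n^'n \<Rightarrow> real^'n \<Rightarrow> nat \<Rightarrow> nat \<Rightarrow> real^'n \<Rightarrow> real" where
  "Omega P0 P1 e D w p =
     (\<chi> i. 1 - e $ i) \<bullet> (mpow (P1 ** diag_mat e) (w - D) *v (mpow P0 D *v p))"

definition gD :: "real^'n^'n \<Rightarrow> real^'n^'n \<Rightarrow> real^'n \<Rightarrow> nat \<Rightarrow> real \<Rightarrow> real^'n \<Rightarrow> real" where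
  "gD P0 P1 e D b p = b ^ D *
     ((\<chi> i. 1 - e $ i) \<bullet> (matrix_inv (mat 1 - b *\<^sub>R (P1 ** diag_mat e)) *v (mpow P0 D *v p)))"

definition fD :: "real^'n^'n \<Rightarrow> real^'n^'n \<Rightarrow> real^'n \<Rightarrow> nat \<Rightarrow> nat \<Rightarrow> real \<Rightarrow> real^'n \<Rightarrow> real" where
  "fD P0 P1 e D \<mu> b p = b ^ \<mu> *
     ((\<chi> i. 1 - e $ i) \<bullet> (mpow (P1 ** diag_mat e) (\<mu> - D) *v
        (matrix_inv (mat 1 - b *\<^sub>R (P1 ** diag_mat e)) *v (mpow P0 D *v p))))"

definition mu :: "nat \<Rightarrow> real \<Rightarrow> real \<Rightarrow> real \<Rightarrow> nat \<Rightarrow> nat \<Rightarrow> nat" where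
  "mu D c B xR k R =
     (if xR = 0 then D
      else nat (max (int D) (\<lceil>ln (xR\<^sup>2 / B) / ln (1 / c\<^sup>2)\<rceil> - int (k - R))))"

text \<open>Starting at time k from plant state x and controller estimate xh (= \<open>\<hat>x_k\<close>),
  with no reception at times k, ..., k+j-1: \<open>u_i = L \<hat>x_i\<close>,
  \<open>x_{i+1} = a x_i + u_i + v_i\<close>, \<open>\<hat>x_{i+1} = (a+L) \<hat>x_i\<close>.\<close>
fun traj :: "real \<Rightarrow> real \<Rightarrow> (nat \<Rightarrow> 'w \<Rightarrow> real) \<Rightarrow> nat \<Rightarrow> real \<Rightarrow> real \<Rightarrow> nat \<Rightarrow> 'w \<Rightarrow> real \<times> real" where
  "traj a L v k x xh 0 \<omega> = (x, xh)"
| "traj a L v k x xh (Suc j) \<omega> =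
     (let (x', xh') = traj a L v k x xh j \<omega>
      in (a * x' + L * xh' + v (k + j) \<omega>, (a + L) * xh'))"

definition h_at :: "real \<Rightarrow> real \<Rightarrow> real \<Rightarrow> real \<Rightarrow> (nat \<Rightarrow> 'w \<Rightarrow> real) \<Rightarrow> nat \<Rightarrow> nat \<Rightarrow> real \<Rightarrow> real \<Rightarrow> real \<Rightarrow> nat \<Rightarrow> 'w \<Rightarrow> real" where
  "h_at a L c B v k R xk zk xR w \<omega> =
     (fst (traj a L v k xk (xk - zk) w \<omega>))\<^sup>2 - max (c ^ (2 * (k + w - R)) * xR\<^sup>2) B"

text \<open>Look-ahead function \<open>G_k^D\<close>: expected value of h at the first reception time k+w
  (w \<ge> D), which has probability \<open>\<Omega>_D(w,p_k)\<close> and is independent of the noise;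
  the noise expectation is taken w.r.t. the probability space Mm.\<close>
definition lookahead ::
  "'w measure \<Rightarrow> real \<Rightarrow> real \<Rightarrow> real \<Rightarrow> real \<Rightarrow> (nat \<Rightarrow> 'w \<Rightarrow> real) \<Rightarrow>
   real^'n^'n \<Rightarrow> real^'n^'n \<Rightarrow> real^'n \<Rightarrow> nat \<Rightarrow> nat \<Rightarrow> nat \<Rightarrow> real \<Rightarrow> real \<Rightarrow> real \<Rightarrow> real^'n \<Rightarrow> real" where
  "lookahead Mm a L c B v P0 P1 e D k R xk zk xR p =
     (\<Sum>j. Omega P0 P1 e D (D + j) p * integral\<^sup>L Mm (h_at a L c B v k R xk zk xR (D + j)))"

end

theory Submission
  imports Defs "HOL-Complex_Analysis.Complex_Analysis"
begin


lemma noise_cross: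
  fixes v :: "nat \<Rightarrow> 'w \<Rightarrow> real"
  assumes prob: "prob_space M"
    and meas: "\<And>i. v i \<in> borel_measurable M"
    and indep: "prob_space.indep_vars M (\<lambda>_. borel) v UNIV"
    and int2: "\<And>i. integrable M (\<lambda>\<omega>. (v i \<omega>)\<^sup>2)"
    and mean: "\<And>i. prob_space.expectation M (v i) = 0"
    and var: "\<And>i. prob_space.variance M (v i) = Mv"
  shows "integrable M (\<lambda>\<omega>. v i \<omega> * v j \<omega>)"
    and "integral\<^sup>L M (\<lambda>\<omega>. v i \<omega> * v j \<omega>) = (if i = j then Mv else 0)"
proof -
  interpret prob_space M by (rule prob)
  have int1: "integrable M (v i)" for i
    by (rule square_integrable_imp_integrable[OF meas int2])
  have "integrable M (\<lambda>\<omega>. v i \<omega> * v j \<omega>) \<and>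
      integral\<^sup>L M (\<lambda>\<omega>. v i \<omega> * v j \<omega>) = (if i = j then Mv else 0)"
  proof (cases "i = j")
    case True
    have "integral\<^sup>L M (\<lambda>\<omega>. v i \<omega> * v i \<omega>) = Mv"
      using var[of i] mean[of i] by (simp add: power2_eq_square)
    then show ?thesis using True int2[of i] by (simp add: power2_eq_square)
  next
    case False
    have ind: "indep_vars (\<lambda>_. borel) v {i, j}"
      using indep_vars_subset[OF indep] by auto
    have p: "(\<lambda>\<omega>. \<Prod>l\<in>{i,j}. v l \<omega>) = (\<lambda>\<omega>. v i \<omega> * v j \<omega>)"
      using False by auto
    have "integrable M (\<lambda>\<omega>. \<Prod>l\<in>{i,j}. v l \<omega>)"
      by (rule indep_vars_integrable[OF _ ind]) (auto simp: int1)
    moreover have "integral\<^sup>L M (\<lambda>\<omega>. \<Prod>l\<in>{i,j}. v l \<omega>) = (\<Prod>l\<in>{i,j}. integral\<^sup>L M (v l))"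
      by (rule indep_vars_lebesgue_integral[OF _ ind]) (auto simp: int1)
    ultimately show ?thesis using False mean by (simp add: p)
  qed
  then show "integrable M (\<lambda>\<omega>. v i \<omega> * v j \<omega>)"
    and "integral\<^sup>L M (\<lambda>\<omega>. v i \<omega> * v j \<omega>) = (if i = j then Mv else 0)" by auto
qed

lemma noise_quad:
  fixes v :: "nat \<Rightarrow> 'w \<Rightarrow> real"
  assumes prob: "prob_space M"
    and meas: "\<And>i. v i \<in> borel_measurable M"
    and indep: "prob_space.indep_vars M (\<lambda>_. borel) v UNIV"
    and int2: "\<And>i. integrable M (\<lambda>\<omega>. (v i \<omega>)\<^sup>2)"
    and mean: "\<And>i. prob_space.expectation M (v i) = 0"
    and var: "\<And>i. prob_space.variance M (v i) = Mv"
    and fin: "finite I"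
  shows "integrable M (\<lambda>\<omega>. (\<alpha> + (\<Sum>i\<in>I. c i * v i \<omega>))\<^sup>2)"
    and "integral\<^sup>L M (\<lambda>\<omega>. (\<alpha> + (\<Sum>i\<in>I. c i * v i \<omega>))\<^sup>2) = \<alpha>\<^sup>2 + Mv * (\<Sum>i\<in>I. (c i)\<^sup>2)"
proof -
  interpret prob_space M by (rule prob)
  note cr = noise_cross[OF prob meas indep int2 mean var]
  have int1: "integrable M (v i)" for i
    by (rule square_integrable_imp_integrable[OF meas int2])
  have eq: "(\<lambda>\<omega>. (\<alpha> + (\<Sum>i\<in>I. c i * v i \<omega>))\<^sup>2) = (\<lambda>\<omega>. \<alpha>\<^sup>2 + (\<Sum>i\<in>I. (2 * \<alpha> * c i) * v i \<omega>)
      + (\<Sum>i\<in>I. \<Sum>j\<in>I. (c i * c j) * (v i \<omega> * v j \<omega>)))"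
    by (auto simp: power2_eq_square algebra_simps sum_distrib_left sum_distrib_right sum.distrib
        intro!: sum.cong)
  have i1: "integrable M (\<lambda>\<omega>. \<Sum>i\<in>I. (2 * \<alpha> * c i) * v i \<omega>)"
    by (intro Bochner_Integration.integrable_sum integrable_mult_right int1)
  have i2: "integrable M (\<lambda>\<omega>. \<Sum>i\<in>I. \<Sum>j\<in>I. (c i * c j) * (v i \<omega> * v j \<omega>))"
    by (intro Bochner_Integration.integrable_sum integrable_mult_right cr)
  show "integrable M (\<lambda>\<omega>. (\<alpha> + (\<Sum>i\<in>I. c i * v i \<omega>))\<^sup>2)"
    unfolding eq by (intro Bochner_Integration.integrable_add i1 i2) simp
  have "integral\<^sup>L M (\<lambda>\<omega>. (\<alpha> + (\<Sum>i\<in>I. c i * v i \<omega>))\<^sup>2)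
      = \<alpha>\<^sup>2 + (\<Sum>i\<in>I. (2 * \<alpha> * c i) * integral\<^sup>L M (v i))
        + (\<Sum>i\<in>I. \<Sum>j\<in>I. (c i * c j) * integral\<^sup>L M (\<lambda>\<omega>. v i \<omega> * v j \<omega>))"
    unfolding eq using i1 i2
    by (simp add: Bochner_Integration.integral_add prob_space int1 cr)
  also have "\<dots> = \<alpha>\<^sup>2 + Mv * (\<Sum>i\<in>I. (c i)\<^sup>2)"
    using mean fin by (simp add: cr(2) if_distrib sum.If_cases power2_eq_square sum_distrib_left
        mult.commute cong: if_cong)
  finally show "integral\<^sup>L M (\<lambda>\<omega>. (\<alpha> + (\<Sum>i\<in>I. c i * v i \<omega>))\<^sup>2) = \<alpha>\<^sup>2 + Mv * (\<Sum>i\<in>I. (c i)\<^sup>2)" .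
qed



lemma traj_closed:
  "traj a L v k x xh w \<omega> = ((a+L)^w * xh + a^w * (x - xh) + (\<Sum>i<w. a^(w-1-i) * v (k+i) \<omega>),
      (a+L)^w * xh)"
proof (induction w)
  case 0
  then show ?case by simp
next
  case (Suc w)
  have "a * (\<Sum>i<w. a^(w-1-i) * v (k+i) \<omega>) = (\<Sum>i<w. a^(Suc w-1-i) * v (k+i) \<omega>)"
    unfolding sum_distrib_left
    by (intro sum.cong refl) (auto simp: Suc_diff_Suc power_Suc[symmetric] simp del: power_Suc)
  then show ?case using Suc by (simp add: algebra_simps)
qed

lemma sum_sq_pow: "(\<Sum>i<w. (a^(w-1-i))\<^sup>2) = (\<Sum>i<w. (a\<^sup>2)^i)" for a :: real
proof -
  have "(\<Sum>i<w. (a^(w-1-i))\<^sup>2) = (\<Sum>i<w. (a\<^sup>2)^(w-1-i))"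
    by (simp add: power_mult[symmetric] power_mult_distrib power2_eq_square mult.commute
        flip: power_add)
  also have "\<dots> = (\<Sum>i<w. (a\<^sup>2)^i)"
    by (rule sum.reindex_bij_witness[where i="\<lambda>i. w-1-i" and j="\<lambda>i. w-1-i"]) auto
  finally show ?thesis .
qed



lemma neumann_right_inv:
  fixes M :: "'a::{real_normed_field,banach}^'n^'n" and X :: "nat \<Rightarrow> 'a^'n^'n"
  assumes X0: "X 0 = mat 1" and XS: "\<And>n. X (Suc n) = M ** X n"
    and sm: "\<And>i k. summable (\<lambda>n. z^n * X n $ i $ k)"
  shows "(\<chi> i j. (if i = j then 1 else 0) - z * M$i$j) ** (\<chi> i k. \<Sum>n. z^n * X n $ i $ k) = mat 1"
proof -
  have entry: "(\<Sum>l\<in>UNIV. ((if i = l then 1 else 0) - z * M$i$l) * (\<Sum>n. z^n * X n $ l $ k))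
      = (if i = k then 1 else 0)" for i k
  proof -
    have "(\<Sum>l\<in>UNIV. M$i$l * (\<Sum>n. z^n * X n $ l $ k)) = (\<Sum>l\<in>UNIV. \<Sum>n. M$i$l * (z^n * X n $ l $ k))"
      by (intro sum.cong refl suminf_mult[symmetric] sm)
    also have "\<dots> = (\<Sum>n. \<Sum>l\<in>UNIV. M$i$l * (z^n * X n $ l $ k))"
      by (intro suminf_sum[symmetric] summable_mult sm)
    also have "\<dots> = (\<Sum>n. z^n * X (Suc n) $ i $ k)"
      by (intro suminf_cong) (simp add: XS matrix_matrix_mult_def sum_distrib_left algebra_simps)
    finally have A: "(\<Sum>l\<in>UNIV. M$i$l * (\<Sum>n. z^n * X n $ l $ k)) = (\<Sum>n. z^n * X (Suc n) $ i $ k)" .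
    have B: "z * (\<Sum>n. z^n * X (Suc n) $ i $ k) = (\<Sum>n. z^(Suc n) * X (Suc n) $ i $ k)"
    proof (cases "z = 0")
      case True then show ?thesis by simp
    next
      case False
      have "summable (\<lambda>n. (1/z) * (z^(Suc n) * X (Suc n) $ i $ k))"
        using summable_Suc_iff[THEN iffD2, OF sm[of i k]] by (rule summable_mult)
      then have "summable (\<lambda>n. z^n * X (Suc n) $ i $ k)" using False by simp
      then show ?thesis
        by (subst suminf_mult[symmetric]) (auto simp: algebra_simps)
    qed
    have C: "(\<Sum>n. z^(Suc n) * X (Suc n) $ i $ k) = (\<Sum>n. z^n * X n $ i $ k) - X 0 $ i $ k"
      using suminf_split_head[OF sm[of i k]] by simp
    have "(\<Sum>l\<in>UNIV. ((if i = l then 1 else 0) - z * M$i$l) * (\<Sum>n. z^n * X n $ l $ k))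
        = (\<Sum>n. z^n * X n $ i $ k) - z * (\<Sum>l\<in>UNIV. M$i$l * (\<Sum>n. z^n * X n $ l $ k))"
    proof -
      have "(\<Sum>l\<in>UNIV. ((if i = l then 1 else 0) - z * M$i$l) * (\<Sum>n. z^n * X n $ l $ k))
        = (\<Sum>l\<in>UNIV. (if i = l then (\<Sum>n. z^n * X n $ l $ k) else 0) - z * (M$i$l * (\<Sum>n. z^n * X n $ l $ k)))"
        by (intro sum.cong refl) (simp add: algebra_simps)
      also have "\<dots> = (\<Sum>n. z^n * X n $ i $ k) - z * (\<Sum>l\<in>UNIV. M$i$l * (\<Sum>n. z^n * X n $ l $ k))"
        by (simp add: sum_subtractf sum_distrib_left)
      finally show ?thesis .
    qed
    also have "\<dots> = X 0 $ i $ k" using A B C by simp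
    finally show ?thesis by (simp add: X0 mat_def)
  qed
  show ?thesis
    by (simp add: vec_eq_iff matrix_matrix_mult_def entry mat_def)
qed



lemma mpow_bound:
  fixes M :: "real^'n^'n"
  shows "\<bar>mpow M n $ i $ k\<bar> \<le> (1 + (\<Sum>r\<in>UNIV. \<Sum>s\<in>UNIV. \<bar>M$r$s\<bar>)) ^ n"
proof (induction n arbitrary: i k)
  case 0
  then show ?case by (simp add: mat_def)
next
  case (Suc n)
  define C where "C = 1 + (\<Sum>r\<in>UNIV. \<Sum>s\<in>UNIV. \<bar>M$r$s\<bar>)"
  have C0: "0 \<le> C" unfolding C_def by (intro add_nonneg_nonneg sum_nonneg) auto
  have row: "(\<Sum>l\<in>UNIV. \<bar>M$i$l\<bar>) \<le> C"
  proof -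
    have "(\<Sum>l\<in>UNIV. \<bar>M$i$l\<bar>) \<le> (\<Sum>r\<in>UNIV. \<Sum>s\<in>UNIV. \<bar>M$r$s\<bar>)"
      by (rule member_le_sum[where f="\<lambda>r. \<Sum>s\<in>UNIV. \<bar>M$r$s\<bar>"]) (auto intro: sum_nonneg)
    then show ?thesis unfolding C_def by simp
  qed
  have "\<bar>mpow M (Suc n) $ i $ k\<bar> = \<bar>\<Sum>l\<in>UNIV. M$i$l * mpow M n $ l $ k\<bar>"
    by (simp add: matrix_matrix_mult_def)
  also have "\<dots> \<le> (\<Sum>l\<in>UNIV. \<bar>M$i$l\<bar> * C^n)"
    by (rule order_trans[OF sum_abs]) (auto intro!: sum_mono mult_left_mono simp: abs_mult Suc[unfolded C_def[symmetric]])
  also have "\<dots> \<le> C * C^n"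
    by (simp add: sum_distrib_right[symmetric] mult_right_mono row C0)
  finally show ?case unfolding C_def by simp
qed

lemma cmat_mult: "cmat (A ** B) = cmat A ** cmat B"
  by (simp add: cmat_def vec_eq_iff matrix_matrix_mult_def)

lemma cmat_one: "cmat (mat 1) = mat 1"
  by (simp add: cmat_def vec_eq_iff mat_def)

lemma holomorphic_det:
  fixes B :: "complex \<Rightarrow> complex^'n^'n"
  assumes "\<And>r s. (\<lambda>z. B z $ r $ s) holomorphic_on S"
  shows "(\<lambda>z. det (B z)) holomorphic_on S"
  unfolding det_def
  by (intro holomorphic_on_sum holomorphic_on_mult holomorphic_on_prod holomorphic_on_const assms)



lemma eig_bound:
  fixes M :: "real^'n^'n"
  assumes "v \<noteq> 0" "cmat M *v v = l *s v"
  shows "cmod l \<le> 1 + (\<Sum>r\<in>UNIV. \<Sum>s\<in>UNIV. \<bar>M$r$s\<bar>)"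
proof -
  define m where "m = Max (range (\<lambda>j. cmod (v$j)))"
  have "m \<in> range (\<lambda>j. cmod (v$j))" unfolding m_def by (rule Max_in) auto
  then obtain i where i: "cmod (v$i) = m" by auto
  have mj: "cmod (v$j) \<le> m" for j unfolding m_def by (rule Max_ge) auto
  have "m > 0"
  proof (rule ccontr)
    assume "\<not> m > 0"
    then have "v$j = 0" for j using mj[of j] by (meson norm_le_zero_iff not_le order_trans)
    then show False using assms(1) by (simp add: vec_eq_iff)
  qed
  have "cmod l * m = cmod ((cmat M *v v) $ i)" using assms(2) i by (simp add: norm_mult)
  also have "\<dots> = cmod (\<Sum>j\<in>UNIV. complex_of_real (M$i$j) * v$j)"
    by (simp add: matrix_vector_mult_def cmat_def)
  also have "\<dots> \<le> (\<Sum>j\<in>UNIV. \<bar>M$i$j\<bar> * m)"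
    by (rule order_trans[OF norm_sum]) (auto intro!: sum_mono mult_left_mono mj simp: norm_mult)
  also have "\<dots> \<le> (1 + (\<Sum>r\<in>UNIV. \<Sum>s\<in>UNIV. \<bar>M$r$s\<bar>)) * m"
  proof -
    have "(\<Sum>l\<in>UNIV. \<bar>M$i$l\<bar>) \<le> (\<Sum>r\<in>UNIV. \<Sum>s\<in>UNIV. \<bar>M$r$s\<bar>)"
      by (rule member_le_sum[where f="\<lambda>r. \<Sum>s\<in>UNIV. \<bar>M$r$s\<bar>"]) (auto intro: sum_nonneg)
    then show ?thesis using \<open>m > 0\<close> by (simp add: sum_distrib_right[symmetric])
  qed
  finally show ?thesis using \<open>m > 0\<close> by simp
qed

lemma spectral_radius_neumann:
  fixes M :: "real^'n^'n"
  assumes rho: "a2 * spectral_radius M < 1" and a2: "a2 \<ge> 0"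
  shows "summable (\<lambda>n. a2^n * \<bar>mpow M n $ i $ k\<bar>)"
proof -
  define \<rho> where "\<rho> = spectral_radius M"
  define C where "C = 1 + (\<Sum>r\<in>UNIV. \<Sum>s\<in>UNIV. \<bar>M$r$s\<bar>)"
  have C1: "C \<ge> 1" unfolding C_def by (simp add: sum_nonneg)
  define E where "E = {cmod l | l. \<exists>v::complex^'n. v \<noteq> 0 \<and> cmat M *v v = l *s v}"
  have rhoE: "\<rho> = Sup E" unfolding \<rho>_def E_def spectral_radius_def ..
  have bddE: "bdd_above E" unfolding E_def bdd_above_def using eig_bound[of _ M] C_def by blast
  obtain r where r: "a2 < r" "r * \<rho> < 1"
  proof (cases "\<rho> \<le> 0")
    case True
    then show ?thesis using that[of "a2 + 1"] a2 by (smt (verit) mult_nonneg_nonpos)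
  next
    case False
    have "1 + a2 * \<rho> > 0" using a2 False by (simp add: add_pos_nonneg)
    show ?thesis
      apply (rule that[of "(a2 + 1/\<rho>)/2"])
      using False rho[folded \<rho>_def] a2
      by (auto simp: field_simps)
  qed
  have r0: "r > 0" using r a2 by simp
  define CM where "CM = cmat M"
  define X where "X n = cmat (mpow M n)" for n
  have X0: "X 0 = mat 1" by (simp add: X_def cmat_one)
  have XS: "X (Suc n) = CM ** X n" for n by (simp add: X_def CM_def cmat_mult)
  define A where "A z = (\<chi> i j. (if i = j then 1 else 0) - z * CM$i$j)" for z :: complex
  define Bm where "Bm z = (\<chi> r s. if s = i then (if r = k then 1 else 0) else A z $ r $ s)" for z
  define f where "f z = det (Bm z) / det (A z)" for z
  define F where "F = Abs_fps (\<lambda>n. complex_of_real (mpow M n $ i $ k))"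
  \<comment> \<open>small z: Neumann series\<close>
  have small_sum: "summable (\<lambda>n. z^n * X n $ i' $ k')" if "norm z < 1/C" for z i' k'
  proof (rule summable_comparison_test')
    show "summable (\<lambda>n. (norm z * C)^n)"
      using that C1 by (intro summable_geometric) (auto simp: field_simps)
    show "norm (z^n * X n $ i' $ k') \<le> (norm z * C)^n" for n
      using mpow_bound[of M n i' k'] unfolding X_def cmat_def C_def[symmetric]
      by (simp add: norm_mult norm_power power_mult_distrib mult_left_mono)
  qed
  have small_eq: "eval_fps F z = f z" if "norm z < 1/C" for z
  proof -
    define S where "S = (\<chi> i k. \<Sum>n. z^n * X n $ i $ k)"
    have AS: "A z ** S = mat 1"
      unfolding A_def S_def by (rule neumann_right_inv[OF X0 XS small_sum[OF that]])
    have dA: "det (A z) \<noteq> 0"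
      using AS by (metis invertible_det_nz invertible_right_inverse)
    define b where "b = (\<chi> r. if r = k then 1 else (0::complex))"
    have col: "A z *v (\<chi> l. S $ l $ k) = b"
      using AS by (simp add: b_def vec_eq_iff matrix_vector_mult_def matrix_matrix_mult_def mat_def)
    have "(\<chi> l. S $ l $ k) = (\<chi> kk. det(\<chi> r s. if s = kk then b$r else A z$r$s) / det (A z))"
      using cramer[OF dA] col by blast
    then have "S $ i $ k = det(\<chi> r s. if s = i then b$r else A z$r$s) / det (A z)"
      by (simp add: vec_eq_iff)
    moreover have "(\<chi> r s. if s = i then b$r else A z$r$s) = Bm z"
      by (simp add: Bm_def b_def vec_eq_iff)
    ultimately have "S $ i $ k = det (Bm z) / det (A z)" by simp
    moreover have "eval_fps F z = S $ i $ k"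
      by (simp add: eval_fps_def F_def S_def X_def cmat_def mult.commute)
    ultimately show ?thesis by (simp add: f_def)
  qed
  have expF: "f has_fps_expansion F"
    unfolding has_fps_expansion_def
  proof
    have "ereal (norm (complex_of_real (1/(2*C)))) \<le> fps_conv_radius F"
      unfolding fps_conv_radius_def
    proof (rule conv_radius_geI)
      have "norm (complex_of_real (1/(2*C))) < 1/C" unfolding norm_of_real using C1 by (simp add: field_simps)
      from small_sum[OF this, of i k] show "summable (\<lambda>n. fps_nth F n * complex_of_real (1/(2*C)) ^ n)"
        by (simp add: F_def X_def cmat_def mult.commute)
    qed
    moreover have "0 < ereal (norm (complex_of_real (1/(2*C))))" unfolding norm_of_real using C1 by simp
    ultimately show "0 < fps_conv_radius F" by order
    show "\<forall>\<^sub>F z in nhds 0. eval_fps F z = f z"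
      unfolding eventually_nhds
      by (intro exI[of _ "ball 0 (1/C)"]) (use C1 small_eq in auto)
  qed
  \<comment> \<open>holomorphy on the big ball\<close>
  have dA: "det (A z) \<noteq> 0" if "norm z < r" for z
  proof
    assume "det (A z) = 0"
    then have "\<not> (\<exists>B. B ** A z = mat 1)"
      by (metis invertible_det_nz invertible_left_inverse)
    then obtain x where x: "A z *v x = 0" "x \<noteq> 0"
      unfolding matrix_left_invertible_ker by blast
    have Ax: "(A z *v x) $ i' = x$i' - z * (CM *v x)$i'" for i'
    proof -
      have "(A z *v x) $ i' = (\<Sum>j\<in>UNIV. (if i' = j then x$j else 0) - z * (CM$i'$j * x$j))"
        unfolding A_def matrix_vector_mult_def vec_lambda_beta by (intro sum.cong refl) (auto simp: algebra_simps)
      also have "\<dots> = x$i' - z * (CM *v x)$i'"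
        by (simp add: sum_subtractf sum_distrib_left matrix_vector_mult_def)
      finally show ?thesis .
    qed
    have xe: "x = z *s (CM *v x)"
      using x(1) Ax by (simp add: vec_eq_iff)
    have z0: "z \<noteq> 0" using xe x(2) by auto
    have eig: "cmat M *v x = (1/z) *s x"
      using xe z0 by (simp add: CM_def vec_eq_iff)
    have "cmod (1/z) \<in> E" unfolding E_def using eig x(2) by blast
    then have le: "cmod (1/z) \<le> \<rho>" unfolding rhoE using bddE by (rule cSup_upper)
    have "1 = norm z * cmod (1/z)" using z0 by (simp add: norm_divide)
    also have "\<dots> \<le> norm z * \<rho>" using le by (simp add: mult_left_mono)
    also have "\<dots> \<le> r * \<rho>" using that le norm_ge_zero[of "1/z"] by (intro mult_right_mono) linarith+
    finally show False using r by simp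
  qed
  have hol: "f holomorphic_on eball 0 (ereal r)"
    unfolding f_def eball_ereal
  proof (intro holomorphic_on_divide holomorphic_det)
    show "(\<lambda>z. Bm z $ r' $ s) holomorphic_on ball 0 r" for r' s
    proof -
      have "(\<lambda>z. Bm z $ r' $ s) = (\<lambda>z. if s = i then (if r' = k then 1 else 0) else (if r' = s then 1 else 0) - z * CM$r'$s)"
        unfolding Bm_def A_def by (simp add: fun_eq_iff)
      then show ?thesis by (cases "s = i") (auto intro!: holomorphic_intros)
    qed
    show "(\<lambda>z. A z $ r' $ s) holomorphic_on ball 0 r" for r' s
    proof -
      have "(\<lambda>z. A z $ r' $ s) = (\<lambda>z. (if r' = s then 1 else 0) - z * CM$r'$s)"
        by (simp add: A_def)
      then show ?thesis by (auto intro!: holomorphic_intros)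
    qed
    show "\<And>z. z \<in> ball 0 r \<Longrightarrow> det (A z) \<noteq> 0" using dA by simp
  qed
  have rF: "ereal r \<le> fps_conv_radius F"
    by (rule holomorphic_on_imp_fps_conv_radius_ge[OF expF hol])
  have "ereal a2 < ereal r" using r by simp
  then have "ereal a2 < fps_conv_radius F" using rF by (rule less_le_trans)
  then have "norm (complex_of_real a2) < fps_conv_radius F" using a2 unfolding norm_of_real
    by simp
  from norm_summable_fps[OF this] show ?thesis
    by (simp add: F_def norm_mult norm_power a2 mult.commute)
qed



lemma matrix_inv_eq:
  fixes A S :: "'a::field^'n^'n"
  assumes AS: "A ** S = mat 1"
  shows "matrix_inv A = S"
proof -
  have SA: "S ** A = mat 1" using AS matrix_left_right_inverse by blast
  have P: "A ** matrix_inv A = mat 1 \<and> matrix_inv A ** A = mat 1"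
    unfolding matrix_inv_def by (rule someI[of _ S]) (simp add: AS SA)
  have "matrix_inv A = matrix_inv A ** (A ** S)" by (simp add: AS)
  also have "\<dots> = (matrix_inv A ** A) ** S" by (simp add: matrix_mul_assoc)
  also have "\<dots> = S" using P by simp
  finally show ?thesis .
qed

lemma neumann_real:
  fixes M :: "real^'n^'n"
  assumes rho: "a2 * spectral_radius M < 1" and a2: "a2 \<ge> 0" and b: "\<bar>b\<bar> \<le> a2"
  shows "summable (\<lambda>n. b^n * mpow M n $ i $ k)"
    and "matrix_inv (mat 1 - b *\<^sub>R M) = (\<chi> i k. \<Sum>n. b^n * mpow M n $ i $ k)"
proof -
  have sm: "summable (\<lambda>n. b^n * mpow M n $ i $ k)" for i k
  proof (rule summable_comparison_test')
    show "summable (\<lambda>n. a2^n * \<bar>mpow M n $ i $ k\<bar>)"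
      by (rule spectral_radius_neumann[OF rho a2])
    show "norm (b^n * mpow M n $ i $ k) \<le> a2^n * \<bar>mpow M n $ i $ k\<bar>" for n
      using b by (simp add: abs_mult power_abs mult_right_mono power_mono)
  qed
  then show "summable (\<lambda>n. b^n * mpow M n $ i $ k)" .
  have eq: "mat 1 - b *\<^sub>R M = (\<chi> i j. (if i = j then 1 else 0) - b * M$i$j)"
    by (simp add: vec_eq_iff mat_def)
  show "matrix_inv (mat 1 - b *\<^sub>R M) = (\<chi> i k. \<Sum>n. b^n * mpow M n $ i $ k)"
    unfolding eq
    by (rule matrix_inv_eq, rule neumann_right_inv[where X="mpow M"]) (simp_all add: sm)
qed

lemma neumann_vec:
  fixes M :: "real^'n^'n"
  assumes rho: "a2 * spectral_radius M < 1" and a2: "a2 \<ge> 0" and b: "\<bar>b\<bar> \<le> a2"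
  shows "(\<lambda>j. b^j * (d \<bullet> (mpow M j *v y))) sums (d \<bullet> (matrix_inv (mat 1 - b *\<^sub>R M) *v y))"
proof -
  note N = neumann_real[OF rho a2 b]
  have "(\<lambda>j. \<Sum>i\<in>UNIV. \<Sum>k\<in>UNIV. d$i * (b^j * mpow M j $ i $ k) * y$k) sums
      (\<Sum>i\<in>UNIV. \<Sum>k\<in>UNIV. d$i * (\<Sum>n. b^n * mpow M n $ i $ k) * y$k)"
    by (intro sums_sum sums_mult sums_mult2 summable_sums N(1))
  moreover have "(\<lambda>j. \<Sum>i\<in>UNIV. \<Sum>k\<in>UNIV. d$i * (b^j * mpow M j $ i $ k) * y$k)
      = (\<lambda>j. b^j * (d \<bullet> (mpow M j *v y)))"
    by (simp add: inner_vec_def matrix_vector_mult_def sum_distrib_left sum_distrib_right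
        algebra_simps)
  moreover have "(\<Sum>i\<in>UNIV. \<Sum>k\<in>UNIV. d$i * (\<Sum>n. b^n * mpow M n $ i $ k) * y$k)
      = d \<bullet> (matrix_inv (mat 1 - b *\<^sub>R M) *v y)"
    by (simp add: N(2) inner_vec_def matrix_vector_mult_def sum_distrib_left sum_distrib_right
        algebra_simps)
  ultimately show ?thesis by simp
qed



lemma mpow_add: "mpow A (m + n) = mpow A m ** mpow A n"
  by (induction m) (simp_all add: matrix_mul_assoc)

lemma mpow_comm: "A ** mpow A n = mpow A n ** A"
proof -
  have "mpow A (n + 1) = mpow A n ** mpow A 1" by (rule mpow_add)
  then show ?thesis by simp
qed

lemma mat_sub_ldistrib: "(X::'a::comm_ring_1^'n^'n) ** (A - B) = X ** A - X ** B"
  by (simp add: vec_eq_iff matrix_matrix_mult_def algebra_simps sum_subtractf)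

lemma mat_sub_rdistrib: "((A::'a::comm_ring_1^'n^'n) - B) ** X = A ** X - B ** X"
  by (simp add: vec_eq_iff matrix_matrix_mult_def algebra_simps sum_subtractf)

lemma mat_scaleR_right: "(X::real^'n^'n) ** (k *\<^sub>R B) = k *\<^sub>R (X ** B)"
  by (simp add: vec_eq_iff matrix_matrix_mult_def sum_distrib_left algebra_simps)

lemma T_comm:
  fixes X A :: "real^'n^'n"
  assumes "X ** A = A ** X"
  shows "X ** (mat 1 - b *\<^sub>R A) = (mat 1 - b *\<^sub>R A) ** X"
  using assms by (simp add: mat_sub_ldistrib mat_sub_rdistrib mat_scaleR_right
      scalar_matrix_assoc[symmetric])

lemma inv_comm:
  fixes X T V :: "real^'n^'n"
  assumes "T ** V = mat 1" "V ** T = mat 1" "X ** T = T ** X"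
  shows "X ** V = V ** X"
proof -
  have "V ** X = V ** X ** (T ** V)" using assms by simp
  also have "\<dots> = V ** (X ** T) ** V" by (simp add: matrix_mul_assoc)
  also have "\<dots> = V ** (T ** X) ** V" using assms by simp
  also have "\<dots> = (V ** T) ** X ** V" by (simp add: matrix_mul_assoc)
  also have "\<dots> = X ** V" using assms by simp
  finally show ?thesis by simp
qed

lemma matrix_inv_props:
  fixes T S :: "real^'n^'n"
  assumes "T ** S = mat 1"
  shows "T ** matrix_inv T = mat 1" "matrix_inv T ** T = mat 1"
  using matrix_inv_eq[OF assms] assms matrix_left_right_inverse by auto

lemma neumann_T:
  fixes A :: "real^'n^'n"
  assumes rho: "a2 * spectral_radius A < 1" and a2: "a2 \<ge> 0" and b: "\<bar>b\<bar> \<le> a2"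
  shows "(mat 1 - b *\<^sub>R A) ** matrix_inv (mat 1 - b *\<^sub>R A) = mat 1"
    "matrix_inv (mat 1 - b *\<^sub>R A) ** (mat 1 - b *\<^sub>R A) = mat 1"
proof -
  have eq: "mat 1 - b *\<^sub>R A = (\<chi> i j. (if i = j then 1 else 0) - b * A$i$j)"
    by (simp add: vec_eq_iff mat_def)
  have "(mat 1 - b *\<^sub>R A) ** (\<chi> i k. \<Sum>n. b^n * mpow A n $ i $ k) = mat 1"
    unfolding eq
    by (rule neumann_right_inv[where X="mpow A"]) (simp_all add: neumann_real(1)[OF rho a2 b])
  from matrix_inv_props[OF this] show "(mat 1 - b *\<^sub>R A) ** matrix_inv (mat 1 - b *\<^sub>R A) = mat 1"
    "matrix_inv (mat 1 - b *\<^sub>R A) ** (mat 1 - b *\<^sub>R A) = mat 1" .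
qed

lemma series_g:
  fixes P0 P1 :: "real^'n^'n" and e p :: "real^'n"
  assumes rho: "a2 * spectral_radius (P1 ** diag_mat e) < 1" and a2: "a2 \<ge> 0" and b: "\<bar>b\<bar> \<le> a2"
  shows "(\<lambda>j. Omega P0 P1 e D (D+j) p * b^(D+j)) sums gD P0 P1 e D b p"
proof -
  from sums_mult[OF neumann_vec[OF rho a2 b, of "\<chi> i. 1 - e $ i" "mpow P0 D *v p"], of "b^D"]
  show ?thesis
    by (simp add: Omega_def gD_def power_add algebra_simps)
qed

lemma series_f:
  fixes P0 P1 :: "real^'n^'n" and e p :: "real^'n"
  assumes rho: "a2 * spectral_radius (P1 ** diag_mat e) < 1" and a2: "a2 \<ge> 0" and b: "\<bar>b\<bar> \<le> a2"
    and mu: "D \<le> \<mu>"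
  shows "(\<lambda>j. Omega P0 P1 e D (\<mu>+j) p * b^(\<mu>+j)) sums fD P0 P1 e D \<mu> b p"
proof -
  define A where "A = P1 ** diag_mat e"
  define m where "m = \<mu> - D"
  define q where "q = mpow P0 D *v p"
  define d :: "real^'n" where "d = (\<chi> i. 1 - e $ i)"
  define T where "T = mat 1 - b *\<^sub>R A"
  define V where "V = matrix_inv T"
  note TV = neumann_T[OF rho[folded A_def] a2 b, folded T_def, folded V_def]
  have comm: "mpow A m ** V = V ** mpow A m"
    by (rule inv_comm[OF TV]) (unfold T_def, rule T_comm, rule mpow_comm[symmetric])
  have fD: "fD P0 P1 e D \<mu> b p = b^\<mu> * (d \<bullet> (V *v (mpow A m *v q)))"
    unfolding fD_def A_def[symmetric] m_def[symmetric] q_def[symmetric] d_def[symmetric]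
      T_def[symmetric] V_def[symmetric]
    by (simp add: matrix_vector_mul_assoc comm)
  have om: "Omega P0 P1 e D (\<mu>+j) p = d \<bullet> (mpow A j *v (mpow A m *v q))" for j
    unfolding Omega_def A_def[symmetric] d_def[symmetric] q_def[symmetric]
    using mu by (simp add: matrix_vector_mul_assoc mpow_add[symmetric] m_def add.commute)
  from sums_mult[OF neumann_vec[OF rho[folded A_def] a2 b, of d "mpow A m *v q"], of "b^\<mu>"]
  show ?thesis
    unfolding fD om T_def[symmetric] V_def[symmetric]
    by (simp add: power_add algebra_simps)
qed



lemma ln_thr:
  fixes x2 B c2 :: real
  assumes "x2 > 0" "B > 0" "0 < c2" "c2 < 1"
  shows "B \<le> x2 * c2^n \<longleftrightarrow> real n * ln (1/c2) \<le> ln (x2/B)"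
    and "x2 * c2^n \<le> B \<longleftrightarrow> ln (x2/B) \<le> real n * ln (1/c2)"
proof -
  have e1: "ln (x2 * c2^n) = ln x2 + real n * ln c2" using assms by (simp add: ln_mult ln_realpow)
  have e2: "ln (1/c2) = - ln c2" using assms by (simp add: ln_div)
  have e3: "ln (x2/B) = ln x2 - ln B" using assms by (simp add: ln_div)
  have pos: "x2 * c2^n > 0" using assms by simp
  show "B \<le> x2 * c2^n \<longleftrightarrow> real n * ln (1/c2) \<le> ln (x2/B)"
  proof -
    have "B \<le> x2 * c2^n \<longleftrightarrow> ln B \<le> ln x2 + real n * ln c2" using ln_le_cancel_iff[OF assms(2) pos] e1 by simp
    then show ?thesis unfolding e2 e3 mult_minus_right by (smt (verit))
  qed
  show "x2 * c2^n \<le> B \<longleftrightarrow> ln (x2/B) \<le> real n * ln (1/c2)"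
  proof -
    have "x2 * c2^n \<le> B \<longleftrightarrow> ln x2 + real n * ln c2 \<le> ln B" using ln_le_cancel_iff[OF pos assms(2)] e1 by simp
    then show ?thesis unfolding e2 e3 mult_minus_right by (smt (verit))
  qed
qed

lemma mu_split:
  fixes c B xR :: real
  assumes c: "0 < c\<^sup>2" "c\<^sup>2 < 1" and B: "B > 0" and kR: "R < k"
  shows "D \<le> mu D c B xR k R"
    and "D + j < mu D c B xR k R \<Longrightarrow> max (c ^ (2 * (k + (D + j) - R)) * xR\<^sup>2) B = c ^ (2 * (k + (D + j) - R)) * xR\<^sup>2"
    and "mu D c B xR k R \<le> D + j \<Longrightarrow> max (c ^ (2 * (k + (D + j) - R)) * xR\<^sup>2) B = B"
proof -
  show "D \<le> mu D c B xR k R" unfolding mu_def by auto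
  define K where "K = k - R"
  define n where "n = K + (D + j)"
  have kn: "k + (D + j) - R = n" unfolding n_def K_def using kR by simp
  have cp: "c ^ (2 * n) = (c\<^sup>2)^n" by (simp add: power_mult)
  define L1 where "L1 = ln (1 / c\<^sup>2)"
  have L1: "L1 > 0" unfolding L1_def using c by simp
  define T where "T = ln (xR\<^sup>2 / B) / L1"
  show "D + j < mu D c B xR k R \<Longrightarrow> max (c ^ (2 * (k + (D + j) - R)) * xR\<^sup>2) B = c ^ (2 * (k + (D + j) - R)) * xR\<^sup>2"
  proof -
    assume lt: "D + j < mu D c B xR k R"
    then have x0: "xR \<noteq> 0" unfolding mu_def by auto
    have "int (D + j) < \<lceil>T\<rceil> - int K"
      using lt x0 unfolding mu_def T_def L1_def K_def by (auto simp: max_def split: if_splits)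
    then have "real n < T" unfolding n_def by linarith
    then have "real n * L1 \<le> ln (xR\<^sup>2 / B)" using L1 unfolding T_def by (simp add: pos_less_divide_eq)
    then have "B \<le> xR\<^sup>2 * (c\<^sup>2)^n" using ln_thr(1)[of "xR\<^sup>2" B "c\<^sup>2" n] x0 B c L1_def by simp
    then show ?thesis unfolding kn cp by (simp add: mult.commute)
  qed
  show "mu D c B xR k R \<le> D + j \<Longrightarrow> max (c ^ (2 * (k + (D + j) - R)) * xR\<^sup>2) B = B"
  proof -
    assume le: "mu D c B xR k R \<le> D + j"
    show ?thesis
    proof (cases "xR = 0")
      case True then show ?thesis using B by simp
    next
      case x0: False
      have "\<lceil>T\<rceil> - int K \<le> int (D + j)"
        using le x0 unfolding mu_def T_def L1_def K_def by (auto simp: max_def split: if_splits)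
      then have "T \<le> real n" unfolding n_def by linarith
      then have "ln (xR\<^sup>2 / B) \<le> real n * L1" using L1 unfolding T_def by (simp add: divide_le_eq)
      then have "xR\<^sup>2 * (c\<^sup>2)^n \<le> B" using ln_thr(2)[of "xR\<^sup>2" B "c\<^sup>2" n] x0 B c L1_def by simp
      then show ?thesis unfolding kn cp by (simp add: mult.commute)
    qed
  qed
qed



lemma expect_h:
  fixes v :: "nat \<Rightarrow> 'w \<Rightarrow> real"
  assumes prob: "prob_space M"
    and meas: "\<And>i. v i \<in> borel_measurable M"
    and indep: "prob_space.indep_vars M (\<lambda>_. borel) v UNIV"
    and int2: "\<And>i. integrable M (\<lambda>\<omega>. (v i \<omega>)\<^sup>2)"
    and mean: "\<And>i. prob_space.expectation M (v i) = 0"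
    and var: "\<And>i. prob_space.variance M (v i) = Mv"
    and a1: "a\<^sup>2 \<noteq> 1"
  shows "integrable M (h_at a L c B v k R xk zk xR w)"
    and "integral\<^sup>L M (h_at a L c B v k R xk zk xR w) =
      ((a+L)\<^sup>2)^w * (xk - zk)\<^sup>2 + (a*(a+L))^w * (2 * (xk - zk) * zk) + (a\<^sup>2)^w * zk\<^sup>2
      + Mv / (a\<^sup>2 - 1) * ((a\<^sup>2)^w - 1) - max (c ^ (2 * (k + w - R)) * xR\<^sup>2) B"
proof -
  interpret prob_space M by (rule prob)
  define \<alpha> where "\<alpha> = (a+L)^w * (xk - zk) + a^w * zk"
  define I where "I = (+) k ` {..<w}"
  define cc where "cc i = a^(w-1-(i-k))" for i
  have inj: "inj_on ((+) k) {..<w}" by simp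
  have sumeq: "(\<Sum>i<w. a^(w-1-i) * v (k+i) \<omega>) = (\<Sum>i\<in>I. cc i * v i \<omega>)" for \<omega>
    unfolding I_def cc_def by (simp add: sum.reindex[OF inj])
  have sumeq2: "(\<Sum>i\<in>I. (cc i)\<^sup>2) = (\<Sum>i<w. (a^(w-1-i))\<^sup>2)"
    unfolding I_def cc_def by (simp add: sum.reindex[OF inj])
  have fin: "finite I" unfolding I_def by simp
  have hx: "h_at a L c B v k R xk zk xR w = (\<lambda>\<omega>. (\<alpha> + (\<Sum>i\<in>I. cc i * v i \<omega>))\<^sup>2 - max (c ^ (2 * (k + w - R)) * xR\<^sup>2) B)"
  proof -
    have tr: "fst (traj a L v k xk (xk - zk) w \<omega>) = \<alpha> + (\<Sum>i\<in>I. cc i * v i \<omega>)" for \<omega>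
      unfolding traj_closed fst_conv sumeq[symmetric] \<alpha>_def by simp
    show ?thesis unfolding h_at_def tr ..
  qed
  note Q = noise_quad[OF prob meas indep int2 mean var fin, of \<alpha> cc]
  show "integrable M (h_at a L c B v k R xk zk xR w)"
    unfolding hx by (intro Bochner_Integration.integrable_diff Q(1)) simp
  have gs: "(\<Sum>i<w. (a\<^sup>2)^i) = ((a\<^sup>2)^w - 1) / (a\<^sup>2 - 1)"
    using sum_gp_strict[of "a\<^sup>2" w] a1 by (simp add: field_simps)
  have "integral\<^sup>L M (h_at a L c B v k R xk zk xR w) = \<alpha>\<^sup>2 + Mv * (\<Sum>i<w. (a\<^sup>2)^i) - max (c ^ (2 * (k + w - R)) * xR\<^sup>2) B"
    unfolding hx using Q unfolding sumeq2 sum_sq_pow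
    by (simp add: Bochner_Integration.integral_diff prob_space)
  also have "\<dots> = ((a+L)\<^sup>2)^w * (xk - zk)\<^sup>2 + (a*(a+L))^w * (2 * (xk - zk) * zk) + (a\<^sup>2)^w * zk\<^sup>2
      + Mv / (a\<^sup>2 - 1) * ((a\<^sup>2)^w - 1) - max (c ^ (2 * (k + w - R)) * xR\<^sup>2) B"
  proof -
    have p1: "((a+L)\<^sup>2)^w = ((a+L)^w)\<^sup>2" "(a\<^sup>2)^w = (a^w)\<^sup>2" "(a*(a+L))^w = a^w * (a+L)^w"
      by (simp_all add: power_mult_distrib power2_eq_square)
    have p2: "Mv * (((a\<^sup>2)^w - 1) / (a\<^sup>2 - 1)) = Mv / (a\<^sup>2 - 1) * ((a\<^sup>2)^w - 1)" by simp
    have p3: "\<alpha>\<^sup>2 = ((a+L)^w)\<^sup>2 * (xk - zk)\<^sup>2 + (a^w * (a+L)^w) * (2 * (xk - zk) * zk) + (a^w)\<^sup>2 * zk\<^sup>2"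
      unfolding \<alpha>_def by (simp add: power2_eq_square algebra_simps)
    show ?thesis unfolding gs p1 p3 by simp
  qed
  finally show "integral\<^sup>L M (h_at a L c B v k R xk zk xR w) = ((a+L)\<^sup>2)^w * (xk - zk)\<^sup>2 + (a*(a+L))^w * (2 * (xk - zk) * zk) + (a\<^sup>2)^w * zk\<^sup>2
      + Mv / (a\<^sup>2 - 1) * ((a\<^sup>2)^w - 1) - max (c ^ (2 * (k + w - R)) * xR\<^sup>2) B" .
qed


theorem mainTheorem1:
  fixes a L c Mv B :: real
    and Mm :: "'w measure" and v :: "nat \<Rightarrow> 'w \<Rightarrow> real"
    and P0 P1 :: "real^'n^'n" and e p :: "real^'n"
    and D k R :: nat and xk zk xR :: real
  assumes a: "\<bar>a\<bar> > 1"
    and abar: "0 < (a + L)\<^sup>2" "(a + L)\<^sup>2 < 1"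
    and c: "(a + L)\<^sup>2 < c\<^sup>2" "c\<^sup>2 < 1"
    and MB: "Mv > 0" "B > 0"
    and prob: "prob_space Mm"
    and noise_meas: "\<And>i. v i \<in> borel_measurable Mm"
    and noise_indep: "prob_space.indep_vars Mm (\<lambda>_. borel) v UNIV"
    and noise_id: "\<And>i. distr Mm borel (v i) = distr Mm borel (v 0)"
    and noise_int: "\<And>i. integrable Mm (\<lambda>\<omega>. (v i \<omega>)\<^sup>2)"
    and noise_mean: "\<And>i. prob_space.expectation Mm (v i) = 0"
    and noise_var: "\<And>i. prob_space.variance Mm (v i) = Mv"
    and P: "column_stochastic P0" "column_stochastic P1"
    and e: "\<And>i. 0 \<le> e $ i \<and> e $ i \<le> 1"
    and pk: "prob_vector p"
    and rho: "a\<^sup>2 * spectral_radius (P1 ** diag_mat e) < 1"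
    and D: "D \<ge> 1"
    and kR: "R < k"
  shows "(\<forall>j. integrable Mm (h_at a L c B v k R xk zk xR (D + j)))
    \<and> summable (\<lambda>j. Omega P0 P1 e D (D + j) p * integral\<^sup>L Mm (h_at a L c B v k R xk zk xR (D + j)))
    \<and> lookahead Mm a L c B v P0 P1 e D k R xk zk xR p =
      (let g = (\<lambda>b. gD P0 P1 e D b p);
           \<mu> = mu D c B xR k R;
           f = (\<lambda>b. fD P0 P1 e D \<mu> b p);
           abar = a + L;
           Mbar = Mv / (a\<^sup>2 - 1);
           N = c ^ (2 * (k - R)) * xR\<^sup>2
       in g (abar\<^sup>2) * xk\<^sup>2 + 2 * (g (a * abar) - g (abar\<^sup>2)) * xk * zk
          + (g (a\<^sup>2) + g (abar\<^sup>2) - 2 * g (a * abar)) * zk\<^sup>2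
          + Mbar * (g (a\<^sup>2) - g 1)
          - (B * f 1 + N * (g (c\<^sup>2) - f (c\<^sup>2))))"
proof -
  define Om where "Om j = Omega P0 P1 e D (D + j) p" for j
  define abar where "abar = a + L"
  define Mbar where "Mbar = Mv / (a\<^sup>2 - 1)"
  define g where "g b = gD P0 P1 e D b p" for b
  define \<mu> where "\<mu> = mu D c B xR k R"
  define f where "f b = fD P0 P1 e D \<mu> b p" for b
  define N where "N = c ^ (2 * (k - R)) * xR\<^sup>2"
  define mx where "mx j = max (c ^ (2 * (k + (D + j) - R)) * xR\<^sup>2) B" for j
  have a2g: "a\<^sup>2 > 1" using a by (metis abs_le_square_iff abs_one less_le_not_le not_le one_power2)
  then have a1: "a\<^sup>2 \<noteq> 1" by simp
  have a2pos: "a\<^sup>2 \<ge> 0" by simp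
  have c0: "0 < c\<^sup>2" using abar c by linarith
  note EH = expect_h[OF prob noise_meas noise_indep noise_int noise_mean noise_var a1]
  have int: "\<forall>j. integrable Mm (h_at a L c B v k R xk zk xR (D + j))" using EH(1) by blast
  have Ej: "integral\<^sup>L Mm (h_at a L c B v k R xk zk xR (D + j)) =
      (abar\<^sup>2)^(D+j) * (xk - zk)\<^sup>2 + (a*abar)^(D+j) * (2 * (xk - zk) * zk) + (a\<^sup>2)^(D+j) * zk\<^sup>2
      + Mbar * ((a\<^sup>2)^(D+j) - 1) - mx j" for j
    using EH(2)[of L c B k R xk zk xR "D + j"] by (simp add: abar_def Mbar_def mx_def)
  have b1: "\<bar>abar\<^sup>2\<bar> \<le> a\<^sup>2" using abar a2g unfolding abar_def by simp
  have b2: "\<bar>a * abar\<bar> \<le> a\<^sup>2"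
  proof -
    have "\<bar>abar\<bar> < 1" using abar(2) unfolding abar_def by (simp add: abs_square_less_1)
    then have "\<bar>a * abar\<bar> \<le> \<bar>a\<bar>" by (simp add: abs_mult mult_left_le)
    also have "\<dots> \<le> a\<^sup>2" using a mult_left_mono[of 1 "\<bar>a\<bar>" "\<bar>a\<bar>"] by (simp add: power2_eq_square abs_mult_self_eq)
    finally show ?thesis .
  qed
  have b3: "\<bar>a\<^sup>2\<bar> \<le> a\<^sup>2" by simp
  have b4: "\<bar>1::real\<bar> \<le> a\<^sup>2" using a2g by simp
  have b5: "\<bar>c\<^sup>2\<bar> \<le> a\<^sup>2" using c a2g by simp
  have SG: "(\<lambda>j. Om j * b^(D+j)) sums g b" if "\<bar>b\<bar> \<le> a\<^sup>2" for b
    unfolding Om_def g_def by (rule series_g[OF rho a2pos that])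
  have muD: "D \<le> \<mu>" unfolding \<mu>_def by (rule mu_split(1)[OF c0 c(2) MB(2) kR])
  define m where "m = \<mu> - D"
  have Dm: "D + (j + m) = \<mu> + j" for j unfolding m_def using muD by simp
  have SF: "(\<lambda>j. Om (j + m) * b^(D + (j + m))) sums f b" if "\<bar>b\<bar> \<le> a\<^sup>2" for b
    unfolding Om_def f_def Dm by (rule series_f[OF rho a2pos that muD])
  have mx_hi: "mx j = B" if "m \<le> j" for j
    unfolding mx_def using that muD by (intro mu_split(3)[OF c0 c(2) MB(2) kR]) (simp add: \<mu>_def[symmetric] m_def)
  have mx_lo: "mx j = N * (c\<^sup>2)^(D+j)" if "j < m" for j
  proof -
    have "mx j = c ^ (2 * (k + (D + j) - R)) * xR\<^sup>2"
      unfolding mx_def using that muD by (intro mu_split(2)[OF c0 c(2) MB(2) kR]) (simp add: \<mu>_def[symmetric] m_def)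
    also have "k + (D + j) - R = (k - R) + (D + j)" using kR by simp
    finally show ?thesis unfolding N_def by (simp add: power_add power_mult)
  qed
  have U: "(\<lambda>j. Om j * mx j) sums (N * (g (c\<^sup>2) - f (c\<^sup>2)) + B * f 1)"
  proof -
    have "(\<lambda>j. Om (j + m) * mx (j + m)) = (\<lambda>j. B * (Om (j + m) * 1^(D + (j + m))))"
      by (simp add: mx_hi mult.commute)
    then have sh: "(\<lambda>j. Om (j + m) * mx (j + m)) sums (B * f 1)"
      using sums_mult[OF SF[OF b4], of B] by simp
    have U1: "(\<lambda>j. Om j * mx j) sums (B * f 1 + (\<Sum>i<m. Om i * mx i))"
      using sh sums_iff_shift[of "\<lambda>j. Om j * mx j" m] by simp
    have "(\<lambda>j. Om j * (c\<^sup>2)^(D+j)) sums (f (c\<^sup>2) + (\<Sum>i<m. Om i * (c\<^sup>2)^(D+i)))"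
      using SF[OF b5] sums_iff_shift[of "\<lambda>j. Om j * (c\<^sup>2)^(D+j)" m] by simp
    then have gf: "g (c\<^sup>2) = f (c\<^sup>2) + (\<Sum>i<m. Om i * (c\<^sup>2)^(D+i))"
      using SG[OF b5] sums_unique2 by blast
    have "(\<Sum>i<m. Om i * mx i) = (\<Sum>i<m. N * (Om i * (c\<^sup>2)^(D+i)))"
      by (intro sum.cong refl) (simp add: mx_lo)
    also have "\<dots> = N * (g (c\<^sup>2) - f (c\<^sup>2))" by (simp add: gf sum_distrib_left)
    finally show ?thesis using U1 by (simp add: add.commute)
  qed
  have feq: "(\<lambda>j. Om j * integral\<^sup>L Mm (h_at a L c B v k R xk zk xR (D + j))) =
    (\<lambda>j. (xk - zk)\<^sup>2 * (Om j * (abar\<^sup>2)^(D+j)) + (2 * (xk - zk) * zk) * (Om j * (a*abar)^(D+j))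
       + zk\<^sup>2 * (Om j * (a\<^sup>2)^(D+j)) + Mbar * (Om j * (a\<^sup>2)^(D+j) - Om j * 1^(D+j)) - Om j * mx j)"
    by (rule ext, subst Ej, simp add: algebra_simps)
  have tot: "(\<lambda>j. Om j * integral\<^sup>L Mm (h_at a L c B v k R xk zk xR (D + j))) sums
     ((xk - zk)\<^sup>2 * g (abar\<^sup>2) + (2 * (xk - zk) * zk) * g (a*abar) + zk\<^sup>2 * g (a\<^sup>2)
      + Mbar * (g (a\<^sup>2) - g 1) - (N * (g (c\<^sup>2) - f (c\<^sup>2)) + B * f 1))"
    unfolding feq
    by (intro sums_add sums_diff sums_mult SG b1 b2 b3 b4 U)
  have sumOm: "summable (\<lambda>j. Omega P0 P1 e D (D + j) p * integral\<^sup>L Mm (h_at a L c B v k R xk zk xR (D + j)))"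
    using sums_summable[OF tot] unfolding Om_def .
  have val: "lookahead Mm a L c B v P0 P1 e D k R xk zk xR p =
     (xk - zk)\<^sup>2 * g (abar\<^sup>2) + (2 * (xk - zk) * zk) * g (a*abar) + zk\<^sup>2 * g (a\<^sup>2)
      + Mbar * (g (a\<^sup>2) - g 1) - (N * (g (c\<^sup>2) - f (c\<^sup>2)) + B * f 1)"
    unfolding lookahead_def using sums_unique[OF tot, symmetric] unfolding Om_def .
  show ?thesis
    unfolding Let_def
    using int sumOm val
    unfolding g_def[symmetric] f_def[symmetric] \<mu>_def[symmetric] abar_def[symmetric]
      Mbar_def[symmetric] N_def[symmetric]
    by (simp add: power2_eq_square algebra_simps)
qed

end
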